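(* Let the standing assumptions (listed in the context) hold. Let $(x_k)$ have a cluster point $x^*$ such that $\mathcal{J}|_{\mathcal{N}}$ is strongly convex, where $\mathcal{N}\subset\Omega$ is a convex neighborhood of $x^*$. Then $\lim_{k\to\infty}x_k=x^*$.
   Context: Let $\mathcal{X}$ be a Hilbert space and $\mathcal{J}:\mathcal{X}\to\mathbb{R}$. Algorithm SLBFGS (structured inverse L-BFGS): inputs $x_0\in\mathcal{X}$, $\epsilon\geq0$, $\ell\in\mathbb{N}_0$, $c_0\geq 0$, $C_0\in[c_0,\infty]$, $c_s,c_1,c_2>0$; let $\tau_0>0$. For $k=0,1,2,\ldots$: let $m=\max\{0,k-\ell\}$; choose a symmetric positive semi-definite bounded linear operator $S_k$; set $B_k^{(0)}=\tau_k I+S_k$; let $B_k$ be obtained from $B_k^{(0)}$ and the currently stored pairs $(s_j,y_j)$, $m\le j\le k-1$, by successive L-BFGS updates $B\mapsto B+\frac{yy^T}{y^Ts}-\frac{Bss^TB}{s^TBs}$; set $d_k=-B_k^{-1}\nabla\mathcal{J}(x_k)$; compute a step length $\alpha_k>0$ by a line search; set $s_k=\alpha_kd_k$, $x_{k+1}=x_k+s_k$, $y_k=\nabla\mathcal{J}(x_{k+1})-\nabla\mathcal{J}(x_k)$; store $(s_k,y_k)$ only if $y_k^Ts_k>c_s\|s_k\|^2$; if $k\ge\ell$ remove $(s_m,y_m)$ from storage; stop with output $x_{k+1}$ if $\|\nabla\mathcal{J}(x_{k+1})\|\le\epsilon$; set $z_k=y_k-S_{k+1}s_k$, $\omega^l_{k+1}=\min\{c_0,c_1\|\nabla\mathcal{J}(x_{k+1})\|^{c_2}\}$,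 $\omega^u_{k+1}=\max\{C_0,(c_1\|\nabla\mathcal{J}(x_{k+1})\|^{c_2})^{-1}\}$; with $P(t)=\min\{\max\{t,\omega^l_{k+1}\},\omega^u_{k+1}\}$ and $\rho=z_k^Ts_k$ let $\tau^s=P(\rho/\|s_k\|^2)$, $\tau^g=P(\|z_k\|/\|s_k\|)$, $\tau^z=P(\|z_k\|^2/\rho)$; if $\rho>0$ choose $\tau_{k+1}\in[\tau^s,\tau^z]$, else choose $\tau_{k+1}\in[\tau^s,\tau^g]$. Line searches: Armijo with backtracking means, for fixed $\beta,\sigma\in(0,1)$, $\alpha_k$ is the largest number in $\{1,\beta,\beta^2,\ldots\}$ with $\mathcal{J}(x_{k+1})\le\mathcal{J}(x_k)+\alpha_k\sigma\nabla\mathcal{J}(x_k)^Td_k$; the Wolfe–Powell conditions are this Armijo inequality together with $\nabla\mathcal{J}(x_{k+1})^Td_k\ge\eta\nabla\mathcal{J}(x_k)^Td_k$ for fixed $\eta\in(\sigma,1)$. Let $\Omega=\{x:\mathcal{J}(x)\le\mathcal{J}(x_0)\}$. Standing assumptions: 1) $\mathcal{J}$ is continuously differentiable and bounded below; 2) $\nabla\mathcal{J}$ is Lipschitz continuous on $\Omega$ with constant $L>0$; 3) $(\|S_k\|)$ is bounded; 4) the step sizes consistently satisfy the Armijo condition computed by backtracking, or consistently satisfy the Wolfe–Powell conditions (no uniform continuity assumption on a neighborhood of $\Omega$ is required); 5) $c_0=0$ is only chosen if then $\sup_k\|(B_k^{(0)})^{-1}\|<\infty$; 6) $C_0=\infty$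 is only chosen if either the interval $[\tau^s,\tau^z]$ is replaced by $[\tau^s,\tau^g]$, or $\mathcal{J}$ is twice continuously differentiable, $\int_0^1\nabla^2\mathcal{J}(x_k+ts_k)\,dt-S_{k+1}$ is symmetric positive semi-definite for all $k$ with bounded norms; 7) the algorithm is run with $\epsilon=0$ and generates an infinite sequence $(x_k)$; 8) $(\|B_k\|)$ and $(\|B_k^{-1}\|)$ are bounded. *)

theory Defs
  imports "HOL-Analysis.Analysis"
begin

definition strongly_convex_on :: "'a::real_inner set \<Rightarrow> ('a \<Rightarrow> real) \<Rightarrow> bool" where
  "strongly_convex_on N f \<longleftrightarrow> (\<exists>\<mu>>0. \<forall>x\<in>N. \<forall>y\<in>N. \<forall>t\<in>{0..1}.
     f ((1 - t) *\<^sub>R x + t *\<^sub>R y) \<le> (1 - t) * f x + t * f y - \<mu> / 2 * t * (1 - t) * (norm (x - y))\<^sup>2)"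

definition sym_psd_op :: "('a::real_inner \<Rightarrow> 'a) \<Rightarrow> bool" where
  "sym_psd_op A \<longleftrightarrow> bounded_linear A \<and> (\<forall>u v. A u \<bullet> v = u \<bullet> A v) \<and> (\<forall>v. 0 \<le> v \<bullet> A v)"

definition lbfgs_upd :: "('a::real_inner \<Rightarrow> 'a) \<Rightarrow> 'a \<Rightarrow> 'a \<Rightarrow> ('a \<Rightarrow> 'a)" where
  "lbfgs_upd B s y = (\<lambda>v. B v + ((y \<bullet> v) / (y \<bullet> s)) *\<^sub>R y - ((s \<bullet> B v) / (s \<bullet> B s)) *\<^sub>R B s)"

definition step_s :: "(nat \<Rightarrow> 'a::real_inner) \<Rightarrow> nat \<Rightarrow> 'a" where
  "step_s x k = x (Suc k) - x k"

definition step_y :: "('a::real_inner \<Rightarrow> 'a) \<Rightarrow> (nat \<Rightarrow> 'a) \<Rightarrow> nat \<Rightarrow> 'a" where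
  "step_y G x k = G (x (Suc k)) - G (x k)"

text \<open>Pairs stored at iteration k: indices j with max 0 (k - l) <= j <= k - 1 that passed the
  curvature test  y_j^T s_j > c_s |s_j|^2, in increasing order of j.\<close>
definition stored_pairs :: "('a::real_inner \<Rightarrow> 'a) \<Rightarrow> (nat \<Rightarrow> 'a) \<Rightarrow> nat \<Rightarrow> real \<Rightarrow> nat \<Rightarrow> ('a \<times> 'a) list" where
  "stored_pairs G x l cs k =
     map (\<lambda>j. (step_s x j, step_y G x j))
       (filter (\<lambda>j. step_y G x j \<bullet> step_s x j > cs * (norm (step_s x j))\<^sup>2) [k - l..<k])"

definition B_init :: "(nat \<Rightarrow> real) \<Rightarrow> (nat \<Rightarrow> 'a::real_inner \<Rightarrow> 'a) \<Rightarrow> nat \<Rightarrow> ('a \<Rightarrow> 'a)" where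
  "B_init \<tau> S k = (\<lambda>v. \<tau> k *\<^sub>R v + S k v)"

definition B_lbfgs :: "(nat \<Rightarrow> real) \<Rightarrow> (nat \<Rightarrow> 'a::real_inner \<Rightarrow> 'a) \<Rightarrow> ('a \<Rightarrow> 'a) \<Rightarrow> (nat \<Rightarrow> 'a)
    \<Rightarrow> nat \<Rightarrow> real \<Rightarrow> nat \<Rightarrow> ('a \<Rightarrow> 'a)" where
  "B_lbfgs \<tau> S G x l cs k =
     foldl (\<lambda>B (s, y). lbfgs_upd B s y) (B_init \<tau> S k) (stored_pairs G x l cs k)"

definition clip :: "real \<Rightarrow> ereal \<Rightarrow> real \<Rightarrow> real" where
  "clip wl wu t = real_of_ereal (min (ereal (max t wl)) wu)"

definition tau_rule :: "bool \<Rightarrow> real \<Rightarrow> ereal \<Rightarrow> real \<Rightarrow> real \<Rightarrow> ('a::real_inner \<Rightarrow> 'a)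
    \<Rightarrow> 'a \<Rightarrow> 'a \<Rightarrow> 'a \<Rightarrow> real \<Rightarrow> bool" where
  "tau_rule use_g c0 C0 c1 c2 S1 s y g1 t \<longleftrightarrow>
     (let z = y - S1 s; \<rho> = z \<bullet> s;
          wl = min c0 (c1 * norm g1 powr c2);
          wu = max C0 (ereal (inverse (c1 * norm g1 powr c2)));
          ts = clip wl wu (\<rho> / (norm s)\<^sup>2);
          tg = clip wl wu (norm z / norm s);
          tz = clip wl wu ((norm z)\<^sup>2 / \<rho>)
      in if \<rho> > 0 \<and> \<not> use_g then ts \<le> t \<and> t \<le> tz else ts \<le> t \<and> t \<le> tg)"

end

theory Submission
  imports Defs
begin


lemma sym_linear_bounded:
  fixes T :: "'a::{real_inner,complete_space} \<Rightarrow> 'a"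
  assumes lin: "linear T" and sym: "\<And>u v. T u \<bullet> v = u \<bullet> T v"
  shows "\<exists>K. \<forall>v. norm (T v) \<le> K * norm v"
proof -
  define E where "E n = {v. norm (T v) \<le> real n}" for n :: nat
  have E_alt: "E n = (\<Inter>u\<in>{u. norm u \<le> 1}. {v. \<bar>T u \<bullet> v\<bar> \<le> real n})" for n
  proof (intro set_eqI iffI)
    fix v assume "v \<in> E n"
    then have "norm (T v) \<le> real n" by (simp add: E_def)
    moreover have "\<bar>T u \<bullet> v\<bar> \<le> norm (T v)" if "norm u \<le> 1" for u
    proof -
      have "\<bar>T u \<bullet> v\<bar> = \<bar>u \<bullet> T v\<bar>" by (simp add: sym)
      also have "\<dots> \<le> norm u * norm (T v)" by (rule Cauchy_Schwarz_ineq2)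
      also have "\<dots> \<le> norm (T v)" using that by (simp add: mult_left_le_one_le)
      finally show ?thesis .
    qed
    ultimately show "v \<in> (\<Inter>u\<in>{u. norm u \<le> 1}. {v. \<bar>T u \<bullet> v\<bar> \<le> real n})" by force
  next
    fix v assume H: "v \<in> (\<Inter>u\<in>{u. norm u \<le> 1}. {v. \<bar>T u \<bullet> v\<bar> \<le> real n})"
    show "v \<in> E n"
    proof (cases "T v = 0")
      case True then show ?thesis by (simp add: E_def)
    next
      case False
      define u where "u = (1 / norm (T v)) *\<^sub>R T v"
      have "norm u \<le> 1" using False by (simp add: u_def)
      then have "\<bar>T u \<bullet> v\<bar> \<le> real n" using H by blast
      moreover have "T u \<bullet> v = norm (T v)"
      proof -
        have "T u \<bullet> v = u \<bullet> T v" by (rule sym)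
        also have "\<dots> = (1 / norm (T v)) * (T v \<bullet> T v)" by (simp add: u_def)
        also have "\<dots> = norm (T v)" using False by (simp add: power2_norm_eq_inner[symmetric] power2_eq_square)
        finally show ?thesis .
      qed
      ultimately show ?thesis by (simp add: E_def)
    qed
  qed
  have closedE: "closed (E n)" for n
    unfolding E_alt
    by (intro closed_INT ballI closed_Collect_le continuous_intros)
  have cover: "(\<Union>n. E n) = UNIV"
  proof -
    have "v \<in> E (nat \<lceil>norm (T v)\<rceil>)" for v
      by (simp add: E_def)
    then show ?thesis by blast
  qed
  have "\<exists>n. interior (E n) \<noteq> {}"
  proof (rule ccontr)
    assume "\<not> ?thesis"
    then have "euclidean interior_of \<Union>(range E) = {}"
      by (intro Baire_category_alt) (auto simp: completely_metrizable_space_euclidean closedE)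
    then show False using cover by simp
  qed
  then obtain n v0 where "v0 \<in> interior (E n)" by blast
  then obtain r where r: "r > 0" "ball v0 r \<subseteq> E n" by (meson open_contains_ball open_interior interior_subset subset_trans)
  have small: "norm (T w) \<le> 2 * real n" if "norm w < r" for w
  proof -
    have "v0 + w \<in> E n" using r that by (auto simp: dist_norm)
    moreover have "v0 \<in> E n" using r by auto
    moreover have "T w = T (v0 + w) - T v0" using linear_add[OF lin] by simp
    ultimately show ?thesis unfolding E_def using norm_triangle_ineq4[of "T (v0 + w)" "T v0"] by auto
  qed
  show ?thesis
  proof (intro exI allI)
    fix v
    show "norm (T v) \<le> (4 * real n / r) * norm v"
    proof (cases "v = 0")
      case True then show ?thesis using linear_0[OF lin] by simp
    next
      case False
      define c where "c = r / (2 * norm v)"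
      have c: "c > 0" using False r by (simp add: c_def)
      have "norm (c *\<^sub>R v) < r" using False r by (simp add: c_def)
      then have "norm (T (c *\<^sub>R v)) \<le> 2 * real n" by (rule small)
      then have "c * norm (T v) \<le> 2 * real n" using c by (simp add: linear_scale[OF lin])
      then have "norm (T v) \<le> 2 * real n / c" using c by (simp add: field_simps)
      also have "2 * real n / c = (4 * real n / r) * norm v" using False r by (simp add: c_def field_simps)
      finally show ?thesis .
    qed
  qed
qed



definition "symop (B::'a::real_inner \<Rightarrow> 'a) \<longleftrightarrow> (\<forall>u v. B u \<bullet> v = u \<bullet> B v)"
definition "psdop (B::'a::real_inner \<Rightarrow> 'a) \<longleftrightarrow> (\<forall>v. 0 \<le> v \<bullet> B v)"
definition "goodop B \<longleftrightarrow> bounded_linear B \<and> symop B \<and> psdop B"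

lemma psd_cs:
  fixes B :: "'a::real_inner \<Rightarrow> 'a"
  assumes lin: "linear B" and sym: "symop B" and psd: "psdop B"
  shows "(s \<bullet> B v)\<^sup>2 \<le> (s \<bullet> B s) * (v \<bullet> B v)"
proof -
  define p where "p = s \<bullet> B v"
  define q where "q = s \<bullet> B s"
  define r where "r = v \<bullet> B v"
  have vs: "v \<bullet> B s = p" using sym unfolding symop_def p_def by (metis inner_commute)
  have quad: "0 \<le> r - 2 * t * p + t\<^sup>2 * q" for t
  proof -
    have "0 \<le> (v - t *\<^sub>R s) \<bullet> B (v - t *\<^sub>R s)" using psd unfolding psdop_def by blast
    also have "B (v - t *\<^sub>R s) = B v - t *\<^sub>R B s" using lin by (simp add: linear_diff linear_scale)
    finally show ?thesis
      by (simp add: inner_diff_left inner_diff_right vs p_def[symmetric] q_def[symmetric]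
          r_def[symmetric] power2_eq_square algebra_simps)
  qed
  have q0: "q \<ge> 0" using psd unfolding psdop_def q_def by blast
  have r0: "r \<ge> 0" using psd unfolding psdop_def r_def by blast
  show ?thesis
  proof (cases "q = 0")
    case True
    have "p = 0"
    proof (rule ccontr)
      assume "p \<noteq> 0"
      have "0 \<le> r - 2 * ((r + 1) / (2 * p)) * p + ((r + 1) / (2 * p))\<^sup>2 * q" by (rule quad)
      then show False using True \<open>p \<noteq> 0\<close> by simp
    qed
    then show ?thesis using True by (simp add: p_def q_def r_def)
  next
    case False
    then have qp: "q > 0" using q0 by simp
    have "0 \<le> r - 2 * (p / q) * p + (p / q)\<^sup>2 * q" by (rule quad)
    then have "0 \<le> r - p\<^sup>2 / q" using qp by (simp add: power2_eq_square field_simps)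
    then have "p\<^sup>2 / q \<le> r" by simp
    then have "p\<^sup>2 \<le> q * r" using qp by (simp add: field_simps)
    then show ?thesis by (simp add: p_def q_def r_def)
  qed
qed

lemma upd_good:
  fixes B :: "'a::real_inner \<Rightarrow> 'a"
  assumes g: "goodop B" and ys: "y \<bullet> s > 0"
  shows "goodop (lbfgs_upd B s y)"
proof -
  have bl: "bounded_linear B" and sym: "symop B" and psd: "psdop B" using g by (auto simp: goodop_def)
  have lin: "linear B" using bl bounded_linear.linear by blast
  have symB: "B u \<bullet> v = u \<bullet> B v" for u v using sym by (simp add: symop_def)
  have l1: "bounded_linear (\<lambda>x. y \<bullet> x / (y \<bullet> s))"
    by (rule bounded_linear_compose[OF bounded_linear_divide bounded_linear_inner_right])
  have l2: "bounded_linear (\<lambda>x. s \<bullet> B x / (s \<bullet> B s))"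
    by (rule bounded_linear_compose[OF bounded_linear_divide bounded_linear_compose[OF bounded_linear_inner_right bl]])
  have bl2: "bounded_linear (lbfgs_upd B s y)"
    unfolding lbfgs_upd_def
    by (intro bounded_linear_add bounded_linear_sub bl
        bounded_linear_compose[OF bounded_linear_scaleR_left l1]
        bounded_linear_compose[OF bounded_linear_scaleR_left l2])
  have sym2: "symop (lbfgs_upd B s y)"
    unfolding symop_def
  proof (intro allI)
    fix u v
    have a1: "s \<bullet> B u = u \<bullet> B s" using symB[of s u] by (simp add: inner_commute)
    have a2: "B s \<bullet> v = s \<bullet> B v" by (rule symB)
    have a3: "s \<bullet> B v = v \<bullet> B s" using symB[of s v] by (simp add: inner_commute)
    have a4: "B u \<bullet> s = u \<bullet> B s" by (rule symB)
    have e1: "lbfgs_upd B s y u \<bullet> v = u \<bullet> B v + (y \<bullet> u) * (y \<bullet> v) / (y \<bullet> s) - (u \<bullet> B s) * (v \<bullet> B s) / (s \<bullet> B s)"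
      unfolding lbfgs_upd_def inner_add_left inner_diff_left inner_scaleR_left a1 a2 a3 symB by simp
    have e2: "u \<bullet> lbfgs_upd B s y v = u \<bullet> B v + (y \<bullet> u) * (y \<bullet> v) / (y \<bullet> s) - (u \<bullet> B s) * (v \<bullet> B s) / (s \<bullet> B s)"
      unfolding lbfgs_upd_def inner_add_right inner_diff_right inner_scaleR_right a3
      by (simp add: inner_commute mult.commute)
    show "lbfgs_upd B s y u \<bullet> v = u \<bullet> lbfgs_upd B s y v" using e1 e2 by simp
  qed
  have psd2: "psdop (lbfgs_upd B s y)"
    unfolding psdop_def
  proof
    fix v
    define p where "p = s \<bullet> B v"
    define q where "q = s \<bullet> B s"
    define r where "r = v \<bullet> B v"
    have vs: "v \<bullet> B s = p" using symB unfolding p_def by (metis inner_commute)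
    have cs: "p\<^sup>2 \<le> q * r" using psd_cs[OF lin sym psd] by (simp add: p_def q_def r_def)
    have q0: "q \<ge> 0" using psd unfolding psdop_def q_def by blast
    have r0: "r \<ge> 0" using psd unfolding psdop_def r_def by blast
    have "v \<bullet> lbfgs_upd B s y v = r + (y \<bullet> v)\<^sup>2 / (y \<bullet> s) - p * p / q"
      by (simp add: lbfgs_upd_def inner_add_right inner_diff_right vs p_def[symmetric]
          q_def[symmetric] r_def[symmetric] power2_eq_square inner_commute)
    moreover have "p * p / q \<le> r"
    proof (cases "q = 0")
      case True then show ?thesis using r0 by simp
    next
      case False then show ?thesis using q0 cs by (simp add: field_simps power2_eq_square)
    qed
    moreover have "0 \<le> (y \<bullet> v)\<^sup>2 / (y \<bullet> s)" using ys by simp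
    ultimately show "0 \<le> v \<bullet> lbfgs_upd B s y v" by linarith
  qed
  show ?thesis using bl2 sym2 psd2 by (simp add: goodop_def)
qed

lemma foldl_good:
  assumes "goodop B" "\<forall>(s, y)\<in>set ps. y \<bullet> s > 0"
  shows "goodop (foldl (\<lambda>B (s, y). lbfgs_upd B s y) B ps)"
  using assms
proof (induction ps arbitrary: B)
  case Nil then show ?case by simp
next
  case (Cons a ps)
  obtain s y where a: "a = (s, y)" by (cases a)
  have "goodop (lbfgs_upd B s y)" using Cons.prems a by (intro upd_good) auto
  then show ?case using Cons a by simp
qed

lemma clip_nonneg:
  assumes "0 \<le> wl" "ereal wl \<le> wu"
  shows "0 \<le> clip wl wu t"
proof (cases "ereal (max t wl) \<le> wu")
  case True
  then show ?thesis using assms by (cases "t \<le> wl") (auto simp: clip_def min_def max_def)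
next
  case False
  then have "min (ereal (max t wl)) wu = wu" by (metis min.absorb2 nle_le)
  moreover have "0 \<le> wu" using assms by (metis ereal_less_eq(5) order_trans)
  ultimately show ?thesis by (simp add: clip_def real_of_ereal_pos)
qed

lemma tau_nonneg:
  assumes "tau_rule use_g c0 C0 c1 c2 S1 s y g1 t" "0 \<le> c0" "ereal c0 \<le> C0" "0 < c1"
  shows "0 \<le> t"
proof -
  define wl where "wl = min c0 (c1 * norm g1 powr c2)"
  define wu where "wu = max C0 (ereal (inverse (c1 * norm g1 powr c2)))"
  have wl0: "0 \<le> wl" using assms by (simp add: wl_def)
  have "ereal wl \<le> ereal c0" by (simp add: wl_def)
  also have "\<dots> \<le> C0" by fact
  also have "\<dots> \<le> wu" by (simp add: wu_def)
  finally have wlu: "ereal wl \<le> wu" .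
  define z where "z = y - S1 s"
  have "clip wl wu ((z \<bullet> s) / (norm s)\<^sup>2) \<le> t"
    using assms(1) unfolding tau_rule_def Let_def wl_def[symmetric] wu_def[symmetric] z_def[symmetric]
    by (auto split: if_splits)
  moreover have "0 \<le> clip wl wu ((z \<bullet> s) / (norm s)\<^sup>2)" by (rule clip_nonneg[OF wl0 wlu])
  ultimately show ?thesis by linarith
qed



lemma line_deriv:
  fixes J :: "'a::real_inner \<Rightarrow> real"
  assumes grad: "\<And>v. (J has_derivative (\<lambda>h. G v \<bullet> h)) (at v)"
  shows "((\<lambda>t. J (a + t *\<^sub>R d)) has_real_derivative (G (a + z *\<^sub>R d) \<bullet> d)) (at z)"
proof -
  have l: "((\<lambda>t. a + t *\<^sub>R d) has_derivative (\<lambda>t. t *\<^sub>R d)) (at z)"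
    by (auto intro!: derivative_eq_intros)
  have "((\<lambda>t. J (a + t *\<^sub>R d)) has_derivative (\<lambda>t. G (a + z *\<^sub>R d) \<bullet> (t *\<^sub>R d))) (at z)"
    using has_derivative_compose[OF l grad[of "a + z *\<^sub>R d"]] by (simp add: o_def)
  moreover have "(\<lambda>t. G (a + z *\<^sub>R d) \<bullet> (t *\<^sub>R d)) = (*) (G (a + z *\<^sub>R d) \<bullet> d)"
    by (auto simp: mult.commute)
  ultimately show ?thesis by (simp add: has_field_derivative_def)
qed

lemma sconv_grad:
  fixes J :: "'a::real_inner \<Rightarrow> real"
  assumes grad: "\<And>v. (J has_derivative (\<lambda>h. G v \<bullet> h)) (at v)"
    and mu: "\<forall>x\<in>N. \<forall>y\<in>N. \<forall>t\<in>{0..1}.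
     J ((1 - t) *\<^sub>R x + t *\<^sub>R y) \<le> (1 - t) * J x + t * J y - \<mu> / 2 * t * (1 - t) * (norm (x - y))\<^sup>2"
    and a: "a \<in> N" and b: "b \<in> N"
  shows "J a + G a \<bullet> (b - a) + \<mu> / 2 * (norm (b - a))\<^sup>2 \<le> J b"
proof -
  define \<phi> where "\<phi> t = J (a + t *\<^sub>R (b - a))" for t
  have D: "(\<phi> has_real_derivative (G a \<bullet> (b - a))) (at 0)"
    unfolding \<phi>_def using line_deriv[OF grad, of a "b - a" 0] by simp
  then have L1: "((\<lambda>h. (\<phi> (0 + h) - \<phi> 0) / h) \<longlongrightarrow> G a \<bullet> (b - a)) (at_right 0)"
    unfolding DERIV_def by (rule tendsto_mono[OF at_le, rotated]) simp
  have L2: "((\<lambda>h. J b - J a - \<mu> / 2 * (1 - h) * (norm (a - b))\<^sup>2) \<longlongrightarrow>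
            J b - J a - \<mu> / 2 * (1 - 0) * (norm (a - b))\<^sup>2) (at_right 0)"
    by (intro tendsto_intros)
  have ev: "eventually (\<lambda>h. (\<phi> (0 + h) - \<phi> 0) / h \<le> J b - J a - \<mu> / 2 * (1 - h) * (norm (a - b))\<^sup>2) (at_right 0)"
  proof -
    have "eventually (\<lambda>h::real. 0 < h \<and> h < 1) (at_right 0)"
      by (simp add: eventually_at_right_field) (metis zero_less_one)
    then show ?thesis
    proof (rule eventually_mono)
      fix h :: real assume h: "0 < h \<and> h < 1"
      have "J ((1 - h) *\<^sub>R a + h *\<^sub>R b) \<le> (1 - h) * J a + h * J b - \<mu> / 2 * h * (1 - h) * (norm (a - b))\<^sup>2"
        using mu a b h by auto
      moreover have "(1 - h) *\<^sub>R a + h *\<^sub>R b = a + h *\<^sub>R (b - a)" by (simp add: algebra_simps)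
      ultimately have "\<phi> h - \<phi> 0 \<le> h * (J b - J a - \<mu> / 2 * (1 - h) * (norm (a - b))\<^sup>2)"
        by (simp add: \<phi>_def algebra_simps)
      then show "(\<phi> (0 + h) - \<phi> 0) / h \<le> J b - J a - \<mu> / 2 * (1 - h) * (norm (a - b))\<^sup>2"
        using h by (simp add: divide_le_eq mult.commute)
    qed
  qed
  have "G a \<bullet> (b - a) \<le> J b - J a - \<mu> / 2 * (1 - 0) * (norm (a - b))\<^sup>2"
    by (rule tendsto_le[OF trivial_limit_at_right_real L2 L1 ev])
  then show ?thesis by (simp add: norm_minus_commute)
qed

lemma good_bound1:
  fixes B :: "'a::real_inner \<Rightarrow> 'a"
  assumes g: "goodop B" and M: "M > 0" and bnd: "\<And>v. norm (B v) \<le> M * norm v"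
  shows "(norm (B w))\<^sup>2 \<le> M * (w \<bullet> B w)"
proof -
  have lin: "linear B" and sym: "symop B" and psd: "psdop B"
    using g bounded_linear.linear by (auto simp: goodop_def)
  have cs: "(w \<bullet> B (B w))\<^sup>2 \<le> (w \<bullet> B w) * (B w \<bullet> B (B w))" by (rule psd_cs[OF lin sym psd])
  have e: "w \<bullet> B (B w) = (norm (B w))\<^sup>2"
    using sym by (simp add: symop_def power2_norm_eq_inner)
  have "B w \<bullet> B (B w) \<le> norm (B w) * norm (B (B w))" by (rule norm_cauchy_schwarz)
  also have "\<dots> \<le> norm (B w) * (M * norm (B w))" by (rule mult_left_mono[OF bnd]) simp
  finally have b2: "B w \<bullet> B (B w) \<le> M * (norm (B w))\<^sup>2" by (simp add: power2_eq_square algebra_simps)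
  have wB: "0 \<le> w \<bullet> B w" using psd by (simp add: psdop_def)
  have "((norm (B w))\<^sup>2)\<^sup>2 \<le> (w \<bullet> B w) * (M * (norm (B w))\<^sup>2)"
    using cs e b2 wB by (metis mult_left_mono order_trans)
  then have "(norm (B w))\<^sup>2 * (norm (B w))\<^sup>2 \<le> (M * (w \<bullet> B w)) * (norm (B w))\<^sup>2"
    by (simp add: power2_eq_square algebra_simps)
  then show ?thesis
  proof (cases "norm (B w) = 0")
    case True then show ?thesis using wB M by simp
  next
    case False
    then have "0 < (norm (B w))\<^sup>2" by simp
    with \<open>(norm (B w))\<^sup>2 * (norm (B w))\<^sup>2 \<le> (M * (w \<bullet> B w)) * (norm (B w))\<^sup>2\<close>
    show ?thesis by (rule mult_right_le_imp_le)
  qed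
qed



theorem lemma4p14:
  fixes J :: "'a::{real_inner, complete_space} \<Rightarrow> real"
    and G :: "'a \<Rightarrow> 'a"
    and x :: "nat \<Rightarrow> 'a"
    and \<alpha> \<tau> :: "nat \<Rightarrow> real"
    and S :: "nat \<Rightarrow> 'a \<Rightarrow> 'a"
    and l :: nat
    and c0 cs c1 c2 L \<beta> \<sigma> \<eta> :: real
    and C0 :: ereal
    and armijo use_g :: bool
    and xs :: 'a
    and N :: "'a set"
  defines "\<Omega> \<equiv> {v. J v \<le> J (x 0)}"
      and "B \<equiv> B_lbfgs \<tau> S G x l cs"
      and "d \<equiv> (\<lambda>k. - inv (B_lbfgs \<tau> S G x l cs k) (G (x k)))"
  assumes params: "0 \<le> c0" "ereal c0 \<le> C0" "0 < cs" "0 < c1" "0 < c2" "0 < \<tau> 0"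
    \<comment> \<open>(1) J continuously differentiable with gradient G, bounded below\<close>
    and grad: "\<And>v. (J has_derivative (\<lambda>h. G v \<bullet> h)) (at v)"
    and grad_cont: "continuous_on UNIV G"
    and bdd: "bdd_below (range J)"
    \<comment> \<open>(2) gradient Lipschitz on Omega\<close>
    and lip: "0 < L" "\<And>u v. u \<in> \<Omega> \<Longrightarrow> v \<in> \<Omega> \<Longrightarrow> norm (G u - G v) \<le> L * norm (u - v)"
    \<comment> \<open>structured part S_k: symmetric psd bounded operators, (3) with bounded norms\<close>
    and S_psd: "\<And>k. sym_psd_op (S k)"
    and S_bdd: "\<exists>M. \<forall>k. onorm (S k) \<le> M"
    \<comment> \<open>iteration: B_k invertible, d_k = - B_k^{-1} grad J(x_k), x_{k+1} = x_k + alpha_k d_k\<close>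
    and B_bij: "\<And>k. bij (B k)"
    and iter: "\<And>k. x (Suc k) = x k + \<alpha> k *\<^sub>R d k"
    \<comment> \<open>(4) line search, consistently Armijo-backtracking or Wolfe-Powell\<close>
    and ls_params: "0 < \<beta>" "\<beta> < 1" "0 < \<sigma>" "\<sigma> < 1" "\<sigma> < \<eta>" "\<eta> < 1"
    and ls: "\<And>k. if armijo then
        (\<exists>i::nat. \<alpha> k = \<beta> ^ i)
        \<and> J (x k + \<alpha> k *\<^sub>R d k) \<le> J (x k) + \<alpha> k * \<sigma> * (G (x k) \<bullet> d k)
        \<and> (\<forall>i::nat. J (x k + \<beta> ^ i *\<^sub>R d k) \<le> J (x k) + \<beta> ^ i * \<sigma> * (G (x k) \<bullet> d k)
                    \<longrightarrow> \<beta> ^ i \<le> \<alpha> k)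
      else
        0 < \<alpha> k
        \<and> J (x (Suc k)) \<le> J (x k) + \<alpha> k * \<sigma> * (G (x k) \<bullet> d k)
        \<and> G (x (Suc k)) \<bullet> d k \<ge> \<eta> * (G (x k) \<bullet> d k)"
    \<comment> \<open>update rule for tau_{k+1}\<close>
    and tau: "\<And>k. tau_rule use_g c0 C0 c1 c2 (S (Suc k)) (step_s x k) (step_y G x k)
                   (G (x (Suc k))) (\<tau> (Suc k))"
    \<comment> \<open>(5)\<close>
    and c0_zero: "c0 = 0 \<Longrightarrow> (\<forall>k. bij (B_init \<tau> S k)) \<and> (\<exists>M. \<forall>k. onorm (inv (B_init \<tau> S k)) \<le> M)"
    \<comment> \<open>(6)\<close>
    and C0_inf: "C0 = \<infinity> \<Longrightarrow> use_g \<or>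
       (\<exists>H :: 'a \<Rightarrow> ('a \<Rightarrow>\<^sub>L 'a).
          (\<forall>v. (G has_derivative blinfun_apply (H v)) (at v)) \<and> continuous_on UNIV H \<and>
          (\<forall>k. sym_psd_op (\<lambda>v. blinfun_apply (integral {0..1} (\<lambda>t. H (x k + t *\<^sub>R step_s x k))) v
                                  - S (Suc k) v)) \<and>
          (\<exists>M. \<forall>k. onorm (\<lambda>v. blinfun_apply (integral {0..1} (\<lambda>t. H (x k + t *\<^sub>R step_s x k))) v
                                  - S (Suc k) v) \<le> M))"
    \<comment> \<open>(7) epsilon = 0 and the algorithm never stops\<close>
    and nonstop: "\<And>k. G (x (Suc k)) \<noteq> 0"
    \<comment> \<open>(8) bounded B_k and B_k^{-1}\<close>
    and B_bdd: "\<exists>M. \<forall>k. onorm (B k) \<le> M \<and> onorm (inv (B k)) \<le> M"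
    \<comment> \<open>hypotheses of the lemma\<close>
    and cluster: "\<exists>r. strict_mono r \<and> (x \<circ> r) \<longlonglongrightarrow> xs"
    and N: "convex N" "N \<subseteq> \<Omega>" "xs \<in> interior N"
    and sconv: "strongly_convex_on N J"
  shows "x \<longlonglongrightarrow> xs"
proof -
  have Bk: "B k = foldl (\<lambda>B (s, y). lbfgs_upd B s y) (B_init \<tau> S k) (stored_pairs G x l cs k)" for k
    by (simp add: B_def B_lbfgs_def)
  have tau0: "0 \<le> \<tau> k" for k
  proof (cases k)
    case 0 then show ?thesis using params(6) by simp
  next
    case (Suc n) then show ?thesis using tau_nonneg[OF tau[of n] params(1,2,4)] by simp
  qed
  have init_good: "goodop (B_init \<tau> S k)" for k
  proof -
    have bl: "bounded_linear (S k)" and sy: "\<forall>u v. S k u \<bullet> v = u \<bullet> S k v" and ps: "\<forall>v. 0 \<le> v \<bullet> S k v"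
      using S_psd[of k] by (auto simp: sym_psd_op_def)
    have "bounded_linear (B_init \<tau> S k)" unfolding B_init_def
      by (intro bounded_linear_add bl bounded_linear_scaleR_right bounded_linear_ident)
    moreover have "symop (B_init \<tau> S k)" using sy
      by (simp add: symop_def B_init_def inner_add_left inner_add_right inner_commute)
    moreover have "psdop (B_init \<tau> S k)" using ps tau0[of k]
      by (simp add: psdop_def B_init_def inner_add_right)
    ultimately show ?thesis by (simp add: goodop_def)
  qed
  have pairs: "\<forall>(s, y)\<in>set (stored_pairs G x l cs k). y \<bullet> s > 0" for k
  proof -
    have "0 \<le> cs * (norm v)\<^sup>2" for v :: 'a using params(3) by simp
    then show ?thesis unfolding stored_pairs_def by (force intro: le_less_trans)
  qed
  have Bgood: "goodop (B k)" for k unfolding Bk by (rule foldl_good[OF init_good pairs])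
  have Bbl: "bounded_linear (B k)" for k using Bgood[of k] by (simp add: goodop_def)
  have Blin: "linear (B k)" for k using Bbl bounded_linear.linear by blast
  have Bsym: "B k u \<bullet> v = u \<bullet> B k v" for k u v using Bgood[of k] by (simp add: goodop_def symop_def)
  have Bpsd: "0 \<le> v \<bullet> B k v" for k v using Bgood[of k] by (simp add: goodop_def psdop_def)
  define T where "T k = inv (B k)" for k
  have BT: "B k (T k v) = v" for k v
    using B_bij[of k] by (simp add: T_def bij_is_surj surj_f_inv_f)
  have TB: "T k (B k v) = v" for k v
    using B_bij[of k] by (simp add: T_def bij_is_inj inv_f_f)
  have Tlin: "linear (T k)" for k
  proof (rule linearI)
    fix u v
    have "T k (u + v) = T k (B k (T k u + T k v))" by (simp add: linear_add[OF Blin] BT)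
    then show "T k (u + v) = T k u + T k v" by (simp add: TB)
  next
    fix c u
    have "T k (c *\<^sub>R u) = T k (B k (c *\<^sub>R T k u))" by (simp add: linear_scale[OF Blin] BT)
    then show "T k (c *\<^sub>R u) = c *\<^sub>R T k u" by (simp add: TB)
  qed
  have Tsym: "T k u \<bullet> v = u \<bullet> T k v" for k u v
  proof -
    have "T k u \<bullet> v = T k u \<bullet> B k (T k v)" by (simp add: BT)
    also have "\<dots> = B k (T k u) \<bullet> T k v" by (simp add: Bsym)
    also have "\<dots> = u \<bullet> T k v" by (simp add: BT)
    finally show ?thesis .
  qed
  have Tbl: "bounded_linear (T k)" for k
  proof -
    obtain K where K: "\<forall>v. norm (T k v) \<le> K * norm v"
      using sym_linear_bounded[OF Tlin Tsym] by blast
    show ?thesis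
      by (rule bounded_linear_intro[where K=K]) (auto simp: linear_add[OF Tlin] linear_scale[OF Tlin] K mult.commute)
  qed
  obtain M0 where M0: "\<forall>k. onorm (B k) \<le> M0 \<and> onorm (inv (B k)) \<le> M0" using B_bdd by blast
  define M where "M = max M0 1"
  have Mpos: "M > 0" by (simp add: M_def)
  have Bn: "norm (B k v) \<le> M * norm v" for k v
  proof -
    have "norm (B k v) \<le> onorm (B k) * norm v" by (rule onorm[OF Bbl])
    also have "\<dots> \<le> M * norm v" using M0[rule_format, of k] by (intro mult_right_mono) (auto simp: M_def le_max_iff_disj)
    finally show ?thesis .
  qed
  have Tn: "norm (T k v) \<le> M * norm v" for k v
  proof -
    have "norm (T k v) \<le> onorm (T k) * norm v" by (rule onorm[OF Tbl])
    also have "\<dots> \<le> M * norm v" using M0[rule_format, of k] by (intro mult_right_mono) (auto simp: M_def T_def le_max_iff_disj)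
    finally show ?thesis .
  qed
  define Dd where "Dd k = G (x k) \<bullet> T k (G (x k))" for k
  have dk: "d k = - T k (G (x k))" for k by (simp add: d_def B_def T_def)
  have gd: "G (x k) \<bullet> d k = - Dd k" for k by (simp add: dk Dd_def)
  have D0: "0 \<le> Dd k" for k
    using Bpsd[of "T k (G (x k))" k] by (simp add: Dd_def BT inner_commute)
  have K1: "(norm (G (x k)))\<^sup>2 \<le> M * Dd k" for k
    using good_bound1[OF Bgood Mpos Bn, of k "T k (G (x k))"] by (simp add: BT Dd_def inner_commute)
  have K2: "norm (d k) \<le> M * norm (G (x k))" for k using Tn by (simp add: dk)
  have K3: "norm (G (x k)) * norm (d k) \<le> M\<^sup>2 * Dd k" for k
  proof -
    have "norm (G (x k)) * norm (d k) \<le> norm (G (x k)) * (M * norm (G (x k)))"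
      by (rule mult_left_mono[OF K2]) simp
    also have "\<dots> = M * (norm (G (x k)))\<^sup>2" by (simp add: power2_eq_square)
    also have "\<dots> \<le> M * (M * Dd k)" by (rule mult_left_mono[OF K1]) (use Mpos in simp)
    finally show ?thesis by (simp add: power2_eq_square)
  qed
  have apos: "0 < \<alpha> k" for k
    using ls[of k] ls_params by (cases armijo) auto
  have desc: "J (x (Suc k)) \<le> J (x k) - \<alpha> k * \<sigma> * Dd k" for k
  proof (cases armijo)
    case True
    then have "J (x k + \<alpha> k *\<^sub>R d k) \<le> J (x k) + \<alpha> k * \<sigma> * (G (x k) \<bullet> d k)"
      using ls[of k] by simp
    then show ?thesis by (simp add: iter[symmetric] gd)
  next
    case False
    then show ?thesis using ls[of k] by (simp add: gd)
  qed
  have dec1: "J (x (Suc k)) \<le> J (x k)" for k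
  proof -
    have "0 \<le> \<alpha> k * \<sigma> * Dd k" using apos[of k] ls_params D0[of k] by simp
    then show ?thesis using desc[of k] by linarith
  qed
  have Jdec: "J (x n) \<le> J (x m)" if "m \<le> n" for m n
    using that by (induction rule: dec_induct) (auto intro: order_trans[OF dec1])
  obtain r where r: "strict_mono r" "(x \<circ> r) \<longlonglongrightarrow> xs" using cluster by blast
  have xr: "(\<lambda>j. x (r j)) \<longlonglongrightarrow> xs" using r(2) by (simp add: o_def)
  have Jcont: "isCont J v" for v using has_derivative_continuous[OF grad[of v]] .
  have Gcont: "isCont G v" for v using grad_cont by (simp add: continuous_on_eq_continuous_at)
  have JR: "(\<lambda>j. J (x (r j))) \<longlonglongrightarrow> J xs" by (rule isCont_tendsto_compose[OF Jcont xr])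
  have GR: "(\<lambda>j. G (x (r j))) \<longlonglongrightarrow> G xs" by (rule isCont_tendsto_compose[OF Gcont xr])
  have rge: "j \<le> r j" for j using seq_suble[OF r(1)] .
  have Jlow: "J xs \<le> J (x k)" for k
  proof (rule LIMSEQ_le_const2[OF JR])
    show "\<exists>N. \<forall>n\<ge>N. J (x (r n)) \<le> J (x k)"
      by (rule exI[of _ k]) (auto intro: Jdec order_trans[OF _ rge])
  qed
  have Jgap: "\<exists>K. \<forall>k\<ge>K. J (x k) - J xs < e" if epos: "e > 0" for e
  proof -
    obtain no where "\<forall>n\<ge>no. norm (J (x (r n)) - J xs) < e" using LIMSEQ_D[OF JR epos] by blast
    then have "J (x (r no)) - J xs < e" by auto
    then show ?thesis by (intro exI[of _ "r no"]) (auto dest: Jdec)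
  qed
  have stepgap: "\<alpha> k * \<sigma> * Dd k \<le> J (x k) - J xs" for k
    using desc[of k] Jlow[of "Suc k"] by linarith
  define c' where "c' = min (1 - \<sigma>) (1 - \<eta>)"
  have c'pos: "c' > 0" using ls_params by (simp add: c'_def)
  have xi_exists: "\<exists>\<xi> lam. 0 \<le> lam \<and> lam \<le> \<alpha> k / \<beta> \<and> norm (\<xi> - x k) \<le> lam * norm (d k)
                     \<and> c' * Dd k \<le> (G \<xi> - G (x k)) \<bullet> d k" if small: "\<alpha> k < \<beta>" for k
  proof (cases armijo)
    case False
    have "G (x (Suc k)) \<bullet> d k \<ge> \<eta> * (G (x k) \<bullet> d k)" using ls[of k] False by simp
    then have "(1 - \<eta>) * Dd k \<le> (G (x (Suc k)) - G (x k)) \<bullet> d k"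
      by (simp add: inner_diff_left gd algebra_simps)
    moreover have "c' * Dd k \<le> (1 - \<eta>) * Dd k" using D0[of k] by (intro mult_right_mono) (auto simp: c'_def)
    moreover have "\<alpha> k \<le> \<alpha> k / \<beta>" using apos[of k] ls_params by (simp add: le_divide_eq)
    moreover have "norm (x (Suc k) - x k) = \<alpha> k * norm (d k)" using apos[of k] by (simp add: iter)
    ultimately show ?thesis using apos[of k] by (intro exI[of _ "x (Suc k)"] exI[of _ "\<alpha> k"]) auto
  next
    case True
    obtain i where i: "\<alpha> k = \<beta> ^ i" using ls[of k] True by auto
    have armfail: "\<And>i. J (x k + \<beta> ^ i *\<^sub>R d k) \<le> J (x k) + \<beta> ^ i * \<sigma> * (G (x k) \<bullet> d k) \<Longrightarrow> \<beta> ^ i \<le> \<alpha> k"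
      using ls[of k] True by simp
    obtain i' where i': "i = Suc i'"
    proof (cases i)
      case 0 then show ?thesis using i small ls_params by simp
    next
      case (Suc n) then show ?thesis using that by blast
    qed
    define t where "t = \<beta> ^ i'"
    have tpos: "0 < t" using ls_params by (simp add: t_def)
    have at: "\<alpha> k = \<beta> * t" using i i' by (simp add: t_def)
    have nA: "\<not> J (x k + t *\<^sub>R d k) \<le> J (x k) + t * \<sigma> * (G (x k) \<bullet> d k)"
    proof
      assume "J (x k + t *\<^sub>R d k) \<le> J (x k) + t * \<sigma> * (G (x k) \<bullet> d k)"
      then have "t \<le> \<alpha> k" using armfail[of i'] by (simp add: t_def)
      then show False using at tpos ls_params by (simp add: mult_less_cancel_right1)
    qed
    obtain z where z: "0 < z" "z < t"
      "J (x k + t *\<^sub>R d k) - J (x k + 0 *\<^sub>R d k) = (t - 0) * (G (x k + z *\<^sub>R d k) \<bullet> d k)"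
      using MVT2[of 0 t "\<lambda>\<tau>. J (x k + \<tau> *\<^sub>R d k)" "\<lambda>\<tau>. G (x k + \<tau> *\<^sub>R d k) \<bullet> d k"]
        line_deriv[OF grad] tpos by blast
    have "t * (\<sigma> * (G (x k) \<bullet> d k)) < t * (G (x k + z *\<^sub>R d k) \<bullet> d k)"
      using nA z(3) by (simp add: algebra_simps)
    then have "\<sigma> * (G (x k) \<bullet> d k) < G (x k + z *\<^sub>R d k) \<bullet> d k"
      using tpos by (simp add: mult_less_cancel_left_pos)
    then have "(1 - \<sigma>) * Dd k \<le> (G (x k + z *\<^sub>R d k) - G (x k)) \<bullet> d k"
      by (simp add: inner_diff_left gd algebra_simps)
    moreover have "c' * Dd k \<le> (1 - \<sigma>) * Dd k" using D0[of k] by (intro mult_right_mono) (auto simp: c'_def)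
    moreover have "t = \<alpha> k / \<beta>" using at ls_params by simp
    moreover have "norm ((x k + z *\<^sub>R d k) - x k) \<le> t * norm (d k)"
      using z by (simp add: mult_right_mono)
    ultimately show ?thesis using tpos
      by (intro exI[of _ "x k + z *\<^sub>R d k"] exI[of _ t]) auto
  qed
  have Gzero: "G xs = 0"
  proof (rule ccontr)
    assume gs: "G xs \<noteq> 0"
    define a where "a = norm (G xs)"
    have apos': "a > 0" using gs by (simp add: a_def)
    define \<eta>1 where "\<eta>1 = min (a/2) (c' * a / (8 * M\<^sup>2))"
    have \<eta>1pos: "\<eta>1 > 0" using apos' c'pos Mpos by (simp add: \<eta>1_def)
    obtain \<delta>1 where \<delta>1: "\<delta>1 > 0" "\<And>z. dist z xs < \<delta>1 \<Longrightarrow> dist (G z) (G xs) < \<eta>1"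
      using Gcont[of xs] \<eta>1pos unfolding continuous_at_eps_delta by blast
    define amax where "amax = \<beta> * min (1/2) (\<delta>1 / (8 * a * M))"
    have amaxpos: "amax > 0" using ls_params \<delta>1 apos' Mpos by (simp add: amax_def)
    have amaxb: "amax < \<beta>" using ls_params by (simp add: amax_def)
    have amaxb2: "amax / \<beta> \<le> \<delta>1 / (8 * a * M)" using ls_params by (simp add: amax_def)
    define e where "e = amax * a\<^sup>2 / (4 * M)"
    have epos: "e > 0" using amaxpos apos' Mpos by (simp add: e_def)
    obtain K where K: "\<forall>k\<ge>K. J (x k) - J xs < \<sigma> * e" using Jgap[of "\<sigma> * e"] epos ls_params by auto
    have ev1: "eventually (\<lambda>j. norm (x (r j) - xs) < \<delta>1/2) sequentially"
      using LIMSEQ_D[OF xr, of "\<delta>1/2"] \<delta>1 by (auto simp: eventually_sequentially)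
    have ev2: "eventually (\<lambda>j. norm (G (x (r j)) - G xs) < \<eta>1) sequentially"
      using LIMSEQ_D[OF GR \<eta>1pos] by (auto simp: eventually_sequentially)
    have ev3: "eventually (\<lambda>j. K \<le> r j) sequentially"
      unfolding eventually_sequentially by (rule exI[of _ K]) (auto intro: order_trans[OF _ rge])
    obtain N where N: "\<forall>j\<ge>N. norm (x (r j) - xs) < \<delta>1/2 \<and> norm (G (x (r j)) - G xs) < \<eta>1 \<and> K \<le> r j"
      using eventually_conj[OF ev1 eventually_conj[OF ev2 ev3]] unfolding eventually_sequentially by blast
    define k where "k = r N"
    define g where "g = G (x k)"
    have j1: "norm (x k - xs) < \<delta>1/2" and j2: "norm (g - G xs) < \<eta>1" and j3: "K \<le> k"
      using N by (auto simp: k_def g_def)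
    have e1: "\<eta>1 \<le> a/2" by (simp add: \<eta>1_def)
    have "a \<le> norm g + norm (g - G xs)" using norm_triangle_sub[of "G xs" g] by (simp add: a_def norm_minus_commute)
    then have g1: "a/2 \<le> norm g" using j2 e1 by linarith
    have "norm g \<le> a + norm (g - G xs)" using norm_triangle_sub[of g "G xs"] by (simp add: a_def)
    then have g2: "norm g \<le> 2 * a" using j2 e1 apos' by linarith
    have "(a/2)\<^sup>2 \<le> (norm g)\<^sup>2" using g1 apos' by (intro power_mono) auto
    then have "a\<^sup>2 / 4 \<le> M * Dd k" using K1[of k] by (simp add: g_def power_divide)
    then have Dlow: "a\<^sup>2 / (4 * M) \<le> Dd k" using Mpos by (simp add: field_simps)
    have "\<alpha> k * \<sigma> * Dd k < \<sigma> * e" using stepgap[of k] K j3 by force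
    then have aD: "\<alpha> k * Dd k < e" using ls_params by (simp add: mult.commute mult.left_commute)
    have "\<alpha> k * (a\<^sup>2 / (4 * M)) \<le> \<alpha> k * Dd k" using mult_left_mono[OF Dlow, of "\<alpha> k"] apos[of k] by simp
    then have "\<alpha> k * (a\<^sup>2 / (4 * M)) < amax * (a\<^sup>2 / (4 * M))" using aD by (simp add: e_def)
    then have asmall: "\<alpha> k < amax"
      by (rule mult_right_less_imp_less) (use apos' Mpos in simp)
    then obtain \<xi> lam where xi: "0 \<le> lam" "lam \<le> \<alpha> k / \<beta>" "norm (\<xi> - x k) \<le> lam * norm (d k)"
        "c' * Dd k \<le> (G \<xi> - g) \<bullet> d k"
      using xi_exists[of k] amaxb unfolding g_def by auto
    have lamb: "lam \<le> \<delta>1 / (8 * a * M)"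
    proof -
      have "\<alpha> k / \<beta> \<le> amax / \<beta>" using asmall ls_params by (simp add: divide_right_mono)
      then show ?thesis using xi(2) amaxb2 by linarith
    qed
    have dn: "norm (d k) \<le> 2 * a * M" using K2[of k] g2 Mpos unfolding g_def
      by (metis mult.commute mult_right_mono less_imp_le order_trans)
    have "lam * norm (d k) \<le> (\<delta>1 / (8 * a * M)) * (2 * a * M)"
      using lamb dn xi(1) by (intro mult_mono) auto
    also have "\<dots> = \<delta>1 / 4" using apos' Mpos by (simp add: field_simps)
    finally have "norm (\<xi> - x k) \<le> \<delta>1 / 4" using xi(3) by linarith
    moreover have "norm (\<xi> - xs) \<le> norm (\<xi> - x k) + norm (x k - xs)"
      using norm_triangle_ineq[of "\<xi> - x k" "x k - xs"] by simp
    ultimately have "norm (\<xi> - xs) < \<delta>1" using j1 \<delta>1(1) by linarith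
    then have "norm (G \<xi> - G xs) < \<eta>1" using \<delta>1(2)[of \<xi>] by (simp add: dist_norm)
    then have Gxi: "norm (G \<xi> - g) < 2 * \<eta>1"
      using j2 norm_triangle_ineq4[of "G \<xi> - G xs" "g - G xs"] by simp
    have "c' * Dd k \<le> norm (G \<xi> - g) * norm (d k)" using xi(4) norm_cauchy_schwarz[of "G \<xi> - g" "d k"] by linarith
    also have "\<dots> \<le> (2 * \<eta>1) * (M * norm g)" using Gxi K2[of k] \<eta>1pos unfolding g_def
      by (intro mult_mono) auto
    finally have c1: "c' * Dd k \<le> 2 * \<eta>1 * M * norm g" by simp
    have "c' * (norm g)\<^sup>2 \<le> c' * (M * Dd k)" using K1[of k] c'pos unfolding g_def by (intro mult_left_mono) auto
    also have "\<dots> = M * (c' * Dd k)" by simp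
    also have "\<dots> \<le> M * (2 * \<eta>1 * M * norm g)" using c1 Mpos by (intro mult_left_mono) auto
    finally have "(c' * norm g) * norm g \<le> (2 * \<eta>1 * M\<^sup>2) * norm g" by (simp add: power2_eq_square algebra_simps)
    then have "c' * norm g \<le> 2 * \<eta>1 * M\<^sup>2"
    proof (rule mult_right_le_imp_le)
      show "0 < norm g" using g1 apos' by linarith
    qed
    moreover have "2 * \<eta>1 * M\<^sup>2 \<le> c' * a / 4"
    proof -
      have "\<eta>1 \<le> c' * a / (8 * M\<^sup>2)" by (simp add: \<eta>1_def)
      then show ?thesis using Mpos by (simp add: field_simps)
    qed
    moreover have "c' * (a/2) \<le> c' * norm g" using g1 c'pos by (intro mult_left_mono) auto
    moreover have "0 < c' * a" using c'pos apos' by simp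
    ultimately show False by (simp add: algebra_simps)
  qed
  obtain \<mu> where mu: "\<mu> > 0" and muN: "\<forall>x\<in>N. \<forall>y\<in>N. \<forall>t\<in>{0..1}.
     J ((1 - t) *\<^sub>R x + t *\<^sub>R y) \<le> (1 - t) * J x + t * J y - \<mu> / 2 * t * (1 - t) * (norm (x - y))\<^sup>2"
    using sconv unfolding strongly_convex_on_def by blast
  have SC: "J a + G a \<bullet> (b - a) + \<mu> / 2 * (norm (b - a))\<^sup>2 \<le> J b" if "a \<in> N" "b \<in> N" for a b
    by (rule sconv_grad[OF grad muN that])
  have xsN: "xs \<in> N" using N(3) interior_subset by blast
  obtain \<delta> where \<delta>: "\<delta> > 0" "cball xs \<delta> \<subseteq> N" using N(3) mem_interior_cball by blast
  have F1: "\<mu> / 2 * (norm (z - xs))\<^sup>2 \<le> J z - J xs" if "z \<in> N" for z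
    using SC[OF xsN that] Gzero by simp
  have F2: "J z - J xs \<le> norm (G z) * norm (z - xs)" if "z \<in> N" for z
  proof -
    have "J z + G z \<bullet> (xs - z) + \<mu> / 2 * (norm (xs - z))\<^sup>2 \<le> J xs" by (rule SC[OF that xsN])
    moreover have "0 \<le> \<mu> / 2 * (norm (xs - z))\<^sup>2" using mu by simp
    moreover have "G z \<bullet> (z - xs) \<le> norm (G z) * norm (z - xs)" by (rule norm_cauchy_schwarz)
    moreover have "G z \<bullet> (xs - z) = - (G z \<bullet> (z - xs))" by (simp add: inner_diff_right)
    ultimately show ?thesis by linarith
  qed
  define C where "C = M\<^sup>2 / \<sigma>"
  have C0: "0 \<le> C" using ls_params by (simp add: C_def)
  have jump: "norm (x (Suc k) - x k) \<le> C * norm (x k - xs)" if xkN: "x k \<in> N" for k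
  proof -
    have sk: "norm (x (Suc k) - x k) = \<alpha> k * norm (d k)" using apos[of k] by (simp add: iter)
    show ?thesis
    proof (cases "G (x k) = 0")
      case True
      then have "norm (d k) = 0" using K2[of k] by simp
      then show ?thesis using sk C0 by simp
    next
      case False
      have gp: "0 < norm (G (x k))" using False by simp
      have "\<sigma> * \<alpha> k * (norm (G (x k)) * norm (d k)) \<le> \<sigma> * \<alpha> k * (M\<^sup>2 * Dd k)"
        using K3[of k] apos[of k] ls_params by (intro mult_left_mono) auto
      also have "\<dots> = M\<^sup>2 * (\<alpha> k * \<sigma> * Dd k)" by simp
      also have "\<dots> \<le> M\<^sup>2 * (norm (G (x k)) * norm (x k - xs))"
        using stepgap[of k] F2[OF xkN] by (intro mult_left_mono) auto
      finally have "(\<sigma> * \<alpha> k * norm (d k)) * norm (G (x k)) \<le> (M\<^sup>2 * norm (x k - xs)) * norm (G (x k))"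
        by (simp add: algebra_simps)
      then have "\<sigma> * \<alpha> k * norm (d k) \<le> M\<^sup>2 * norm (x k - xs)"
        by (rule mult_right_le_imp_le) (rule gp)
      then have "\<alpha> k * norm (d k) \<le> M\<^sup>2 * norm (x k - xs) / \<sigma>"
        using ls_params by (simp add: le_divide_eq mult.commute mult.left_commute)
      then show ?thesis using sk by (simp add: C_def)
    qed
  qed
  show ?thesis
  proof (rule LIMSEQ_I)
    fix e :: real assume epos: "0 < e"
    define \<rho> where "\<rho> = min (e/2) (\<delta> / (1 + C))"
    have \<rho>pos: "\<rho> > 0" using epos \<delta> C0 by (simp add: \<rho>_def)
    have \<rho>C: "(1 + C) * \<rho> \<le> \<delta>"
    proof -
      have "\<rho> \<le> \<delta> / (1 + C)" by (simp add: \<rho>_def)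
      then show ?thesis using C0 by (simp add: le_divide_eq mult.commute)
    qed
    have \<rho>\<delta>: "\<rho> \<le> \<delta>" using \<rho>C C0 \<rho>pos by (smt (verit) mult_le_cancel_right1 mult.commute)
    have mr: "\<mu> * \<rho>\<^sup>2 / 2 > 0" using mu \<rho>pos by simp
    have ev1: "eventually (\<lambda>j. norm (x (r j) - xs) < \<rho>) sequentially"
      using LIMSEQ_D[OF xr \<rho>pos] by (auto simp: eventually_sequentially)
    have ev2: "eventually (\<lambda>j. norm (J (x (r j)) - J xs) < \<mu> * \<rho>\<^sup>2 / 2) sequentially"
      using LIMSEQ_D[OF JR mr] by (auto simp: eventually_sequentially)
    obtain j where j: "norm (x (r j) - xs) < \<rho>" "norm (J (x (r j)) - J xs) < \<mu> * \<rho>\<^sup>2 / 2"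
      using eventually_happens'[OF _ eventually_conj[OF ev1 ev2]] by auto
    define K where "K = r j"
    have inN: "z \<in> N" if "norm (z - xs) \<le> \<delta>" for z
      using \<delta>(2) that by (auto simp: dist_norm norm_minus_commute)
    have claim: "norm (x n - xs) \<le> \<rho>" if "K \<le> n" for n
      using that
    proof (induction rule: dec_induct)
      case base then show ?case using j by (simp add: K_def)
    next
      case (step n)
      have xn: "x n \<in> N" using step.IH \<rho>\<delta> inN by simp
      have "norm (x (Suc n) - xs) \<le> norm (x (Suc n) - x n) + norm (x n - xs)"
        using norm_triangle_ineq[of "x (Suc n) - x n" "x n - xs"] by simp
      also have "\<dots> \<le> C * \<rho> + \<rho>"
        using jump[OF xn] step.IH C0 by (smt (verit) mult_left_mono)
      also have "\<dots> \<le> \<delta>" using \<rho>C by (simp add: algebra_simps)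
      finally have xs1: "x (Suc n) \<in> N" by (rule inN)
      have "\<mu> / 2 * (norm (x (Suc n) - xs))\<^sup>2 \<le> J (x (Suc n)) - J xs" by (rule F1[OF xs1])
      also have "\<dots> \<le> J (x K) - J xs" using Jdec[of K "Suc n"] step.hyps by simp
      also have "\<dots> < \<mu> * \<rho>\<^sup>2 / 2" using j(2) unfolding K_def real_norm_def by linarith
      also have "\<mu> * \<rho>\<^sup>2 / 2 = \<mu> / 2 * \<rho>\<^sup>2" by simp
      finally have "\<mu> / 2 * (norm (x (Suc n) - xs))\<^sup>2 < \<mu> / 2 * \<rho>\<^sup>2" .
      then have "(norm (x (Suc n) - xs))\<^sup>2 < \<rho>\<^sup>2"
        by (rule mult_left_less_imp_less) (use mu in simp)
      then have "norm (x (Suc n) - xs) < \<rho>"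
        by (rule power2_less_imp_less) (use \<rho>pos in simp)
      then show ?case by (rule less_imp_le)
    qed
    show "\<exists>no. \<forall>n\<ge>no. norm (x n - xs) < e"
    proof (intro exI allI impI)
      fix n assume "K \<le> n"
      then have "norm (x n - xs) \<le> \<rho>" by (rule claim)
      also have "\<rho> < e" using epos by (simp add: \<rho>_def)
      finally show "norm (x n - xs) < e" .
    qed
  qed
qed

end
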